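(* Let $(X,d)$ be a complete $\mathrm{CAT}(0)$-space and $f:X\to\mathbb{R}$ a lower semi-continuous quasi-convex function. Assume in addition that either (1) $\inf_X f>-\infty$, or (2) $f$ is $\lambda$-convex for some $\lambda<0$. Then for every $x\in X$ and every $\tau>0$ (with $\tau<(-\lambda)^{-1}$ in case (2)), the set $\mathcal J^f_\tau(x)$ is nonempty. Moreover, in case (2) with $\tau<(-\lambda)^{-1}$, $\mathcal J^f_\tau(x)$ consists of exactly one point.
   Context: A metric space is geodesic if any two points $x,y$ are joined by a curve $\gamma:[0,1]\to X$ with $\gamma(0)=x$, $\gamma(1)=y$, $d(\gamma(s),\gamma(t))=|t-s|d(x,y)$ (a minimal geodesic). A geodesic metric space $(X,d)$ is a $\mathrm{CAT}(0)$-space if for all $x,y,z\in X$ and every minimal geodesic $\gamma$ from $y$ to $z$, $d^2(x,\gamma(s))\le(1-s)d^2(x,y)+sd^2(x,z)-(1-s)sd^2(y,z)$ for all $s\in[0,1]$; then minimal geodesics are unique, denoted $\gamma_{xy}$. $f$ is quasi-convex if $f(\gamma_{xy}(s))\le\max\{f(x),f(y)\}$ for all $x,y\in X$, $s\in(0,1)$; $f$ is $\lambda$-convex if $f(\gamma_{xy}(s))\le(1-s)f(x)+sf(y)-\frac{\lambda}{2}(1-s)sd^2(x,y)$ for all $x,y$, $s\in(0,1)$. For $\tau>0$, $f_\tau(x):=\inf_{z\in X}\{f(z)+d^2(x,z)/(2\tau)\}$ and $\mathcal J^f_\tau(x):=\{z\in X: f(z)+d^2(x,z)/(2\tau)=f_\tau(x)\}$.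 *)

theory Defs
  imports "HOL-Analysis.Analysis"
begin

definition min_geodesic :: "(real \<Rightarrow> 'a::metric_space) \<Rightarrow> 'a \<Rightarrow> 'a \<Rightarrow> bool" where
  "min_geodesic \<gamma> x y \<longleftrightarrow> \<gamma> 0 = x \<and> \<gamma> 1 = y \<and>
     (\<forall>s\<in>{0..1}. \<forall>t\<in>{0..1}. dist (\<gamma> s) (\<gamma> t) = \<bar>t - s\<bar> * dist x y)"

definition geodesic_space :: "'a::metric_space itself \<Rightarrow> bool" where
  "geodesic_space _ \<longleftrightarrow> (\<forall>x y::'a. \<exists>\<gamma>. min_geodesic \<gamma> x y)"

definition CAT0 :: "'a::metric_space itself \<Rightarrow> bool" where
  "CAT0 T \<longleftrightarrow> geodesic_space T \<and>
     (\<forall>x y z::'a. \<forall>\<gamma>. min_geodesic \<gamma> y z \<longrightarrow>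
        (\<forall>s\<in>{0..1}. (dist x (\<gamma> s))\<^sup>2 \<le> (1 - s) * (dist x y)\<^sup>2 + s * (dist x z)\<^sup>2
                                     - (1 - s) * s * (dist y z)\<^sup>2))"

definition lower_semicontinuous :: "('a::topological_space \<Rightarrow> real) \<Rightarrow> bool" where
  "lower_semicontinuous f \<longleftrightarrow> (\<forall>x c. c < f x \<longrightarrow> (\<forall>\<^sub>F y in nhds x. c < f y))"

definition quasi_convex :: "('a::metric_space \<Rightarrow> real) \<Rightarrow> bool" where
  "quasi_convex f \<longleftrightarrow> (\<forall>x y \<gamma>. min_geodesic \<gamma> x y \<longrightarrow>
      (\<forall>s\<in>{0<..<1}. f (\<gamma> s) \<le> max (f x) (f y)))"

definition lambda_convex :: "real \<Rightarrow> ('a::metric_space \<Rightarrow> real) \<Rightarrow> bool" where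
  "lambda_convex lam f \<longleftrightarrow> (\<forall>x y \<gamma>. min_geodesic \<gamma> x y \<longrightarrow>
      (\<forall>s\<in>{0<..<1}. f (\<gamma> s) \<le> (1 - s) * f x + s * f y - lam / 2 * (1 - s) * s * (dist x y)\<^sup>2))"

definition moreau :: "('a::metric_space \<Rightarrow> real) \<Rightarrow> real \<Rightarrow> 'a \<Rightarrow> real" where
  "moreau f \<tau> x = (INF z. f z + (dist x z)\<^sup>2 / (2 * \<tau>))"

definition resolvent :: "('a::metric_space \<Rightarrow> real) \<Rightarrow> real \<Rightarrow> 'a \<Rightarrow> 'a set" where
  "resolvent f \<tau> x = {z. f z + (dist x z)\<^sup>2 / (2 * \<tau>) = moreau f \<tau> x}"

end

theory Submission
  imports Defs
begin

lemma cat0_geod: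
  assumes "CAT0 TYPE('a::metric_space)"
  obtains \<gamma> where "min_geodesic \<gamma> (y::'a) z"
  using assms unfolding CAT0_def geodesic_space_def by blast

lemma cat0_ineq:
  assumes "CAT0 TYPE('a::metric_space)" "min_geodesic \<gamma> (y::'a) z" "s \<in> {0..1}"
  shows "(dist x (\<gamma> s))\<^sup>2 \<le> (1 - s) * (dist x y)\<^sup>2 + s * (dist x z)\<^sup>2 - (1 - s) * s * (dist y z)\<^sup>2"
  using assms unfolding CAT0_def by blast

lemma midpoint_ex:
  fixes y z :: "'a::metric_space" and f :: "'a \<Rightarrow> real"
  assumes "CAT0 TYPE('a)"
  obtains w where "\<And>x. (dist x w)\<^sup>2 \<le> (dist x y)\<^sup>2 / 2 + (dist x z)\<^sup>2 / 2 - (dist y z)\<^sup>2 / 4"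
    "quasi_convex f \<Longrightarrow> f w \<le> max (f y) (f z)"
    "lambda_convex lam f \<Longrightarrow> f w \<le> f y / 2 + f z / 2 - lam / 8 * (dist y z)\<^sup>2"
proof -
  obtain \<gamma> where g: "min_geodesic \<gamma> y z" using cat0_geod[OF assms] by blast
  show ?thesis
  proof (rule that[of "\<gamma> (1/2)"])
    fix x
    show "(dist x (\<gamma> (1/2)))\<^sup>2 \<le> (dist x y)\<^sup>2 / 2 + (dist x z)\<^sup>2 / 2 - (dist y z)\<^sup>2 / 4"
      using cat0_ineq[OF assms g, of "1/2" x] by simp
  next
    assume "quasi_convex f"
    then have "\<forall>s\<in>{0<..<1}. f (\<gamma> s) \<le> max (f y) (f z)"
      using g unfolding quasi_convex_def by blast
    moreover have "(1/2::real) \<in> {0<..<1}" by simp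
    ultimately show "f (\<gamma> (1/2)) \<le> max (f y) (f z)" by (rule bspec)
  next
    assume "lambda_convex lam f" then show "f (\<gamma> (1/2)) \<le> f y / 2 + f z / 2 - lam / 8 * (dist y z)\<^sup>2"
      proof -
      have "f (\<gamma> (1/2)) \<le> (1 - 1/2) * f y + 1/2 * f z - lam / 2 * (1 - 1/2) * (1/2) * (dist y z)\<^sup>2"
      proof -
        have "\<forall>s\<in>{0<..<1}. f (\<gamma> s) \<le> (1 - s) * f y + s * f z - lam / 2 * (1 - s) * s * (dist y z)\<^sup>2"
          using \<open>lambda_convex lam f\<close> g unfolding lambda_convex_def by blast
        moreover have "(1/2::real) \<in> {0<..<1}" by simp
        ultimately show ?thesis by (rule bspec)
      qed
      then show ?thesis by simp
    qed
  qed
qed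

lemma lsc_closed:
  assumes "lower_semicontinuous f"
  shows "closed {z. f z \<le> a}"
proof -
  have "open {z. a < f z}"
  proof (rule Topological_Spaces.openI)
    fix y assume "y \<in> {z. a < f z}"
    then have "\<forall>\<^sub>F z in nhds y. a < f z" using assms unfolding lower_semicontinuous_def by auto
    then show "\<exists>T. open T \<and> y \<in> T \<and> T \<subseteq> {z. a < f z}" unfolding eventually_nhds by auto
  qed
  moreover have "- {z. f z \<le> a} = {z. a < f z}" by auto
  ultimately show ?thesis by (simp add: closed_def)
qed


lemma lin_aux: "(a::real) \<le> w \<Longrightarrow> w \<le> p/2 + q/2 - d/4 \<Longrightarrow> p \<le> t \<Longrightarrow> q \<le> t \<Longrightarrow> d \<le> 4*(t - a)"
  by (simp add: field_simps)

lemma level_point: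
  fixes f :: "'a::complete_space \<Rightarrow> real"
  assumes cat: "CAT0 TYPE('a)" and lsc: "lower_semicontinuous f" and qc: "quasi_convex f"
    and H: "\<And>e. e > 0 \<Longrightarrow> \<exists>z. f z \<le> c + e \<and> dist x z \<le> \<rho> + e"
  shows "\<exists>p. f p \<le> c \<and> dist x p \<le> \<rho>"
proof -
  define e where "e n = 1 / (real n + 1)" for n
  define K where "K n = {z. f z \<le> c + e n}" for n
  define r where "r n = Inf (dist x ` K n)" for n
  have epos: "e n > 0" for n by (simp add: e_def)
  have ele1: "e n \<le> 1" for n by (simp add: e_def)
  have emono: "e k \<le> e n" if "n \<le> k" for n k
    unfolding e_def using that by (simp add: frac_le)
  have elim: "e \<longlonglongrightarrow> 0"
  proof -
    have "e = (\<lambda>n. inverse (real (Suc n)))" by (auto simp: e_def fun_eq_iff field_simps)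
    then show ?thesis using LIMSEQ_inverse_real_of_nat by simp
  qed
  have bdd: "bdd_below (dist x ` K n)" for n by (rule bdd_belowI[of _ 0]) auto
  have rle: "r n \<le> \<rho> + e n" for n
  proof -
    obtain z where "f z \<le> c + e n" "dist x z \<le> \<rho> + e n" using H[OF epos] by blast
    then have "z \<in> K n" by (simp add: K_def)
    then have "r n \<le> dist x z" unfolding r_def by (intro cInf_lower bdd) auto
    then show ?thesis using \<open>dist x z \<le> \<rho> + e n\<close> by simp
  qed
  have Kne: "K n \<noteq> {}" for n
    using H[OF epos[of n]] by (auto simp: K_def)
  have Kmono: "K k \<subseteq> K n" if "n \<le> k" for n k using emono[OF that] by (auto simp: K_def)
  have rmono: "r n \<le> r k" if "n \<le> k" for n k
    unfolding r_def by (rule cInf_superset_mono) (use Kne bdd Kmono[OF that] in auto)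
  have r0: "0 \<le> r n" for n unfolding r_def by (rule cInf_greatest) (use Kne in auto)
  have "incseq r" by (simp add: incseq_def rmono)
  moreover have "\<forall>i. r i \<le> \<rho> + 1"
  proof
    fix i show "r i \<le> \<rho> + 1" using rle[of i] ele1[of i] by linarith
  qed
  ultimately obtain R where rR: "r \<longlonglongrightarrow> R" "\<forall>i. r i \<le> R"
    using incseq_convergent[of r "\<rho> + 1"] by blast
  have R0: "0 \<le> R" using r0[of 0] rR(2) by (meson order_trans)
  have "\<forall>n. \<exists>w. w \<in> K n \<and> dist x w < r n + e n"
  proof
    fix n
    have "Inf (dist x ` K n) < r n + e n" using epos[of n] by (simp add: r_def)
    then show "\<exists>w. w \<in> K n \<and> dist x w < r n + e n"
      by (subst (asm) cInf_less_iff) (use Kne bdd in auto)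
  qed
  then obtain z where zK: "\<And>n. z n \<in> K n" and zd: "\<And>n. dist x (z n) < r n + e n" by metis
  have key: "(dist (z n) (z k))\<^sup>2 \<le> 8 * (R + 1) * (R - r n + e n)" if "n \<le> k" for n k
  proof -
    obtain w where w1: "(dist x w)\<^sup>2 \<le> (dist x (z n))\<^sup>2 / 2 + (dist x (z k))\<^sup>2 / 2 - (dist (z n) (z k))\<^sup>2 / 4"
      and w2: "f w \<le> max (f (z n)) (f (z k))"
      using midpoint_ex[OF cat, of "z n" "z k" f] qc by metis
    have "z k \<in> K n" using zK[of k] Kmono[OF that] by blast
    then have "w \<in> K n" using w2 zK[of n] by (auto simp: K_def)
    then have "r n \<le> dist x w" unfolding r_def by (intro cInf_lower bdd) auto
    then have a: "(r n)\<^sup>2 \<le> (dist x w)\<^sup>2" using r0 by (simp add: power_mono)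
    have b: "dist x (z n) \<le> R + e n" using zd[of n] rR(2)[rule_format, of n] by linarith
    have c: "dist x (z k) \<le> R + e n" using zd[of k] rR(2)[rule_format, of k] emono[OF that]
      by linarith
    have b2: "(dist x (z n))\<^sup>2 \<le> (R + e n)\<^sup>2" using b by (simp add: power_mono)
    have c2: "(dist x (z k))\<^sup>2 \<le> (R + e n)\<^sup>2" using c by (simp add: power_mono)
    have "(dist (z n) (z k))\<^sup>2 \<le> 4 * ((R + e n)\<^sup>2 - (r n)\<^sup>2)" using lin_aux[OF a w1 b2 c2] .
    also have "(R + e n)\<^sup>2 - (r n)\<^sup>2 = (R - r n + e n) * (R + e n + r n)"
      by (simp add: power2_eq_square algebra_simps)
    also have "\<dots> \<le> (R - r n + e n) * (2 * R + 2)"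
      using rR(2)[rule_format, of n] ele1[of n] epos[of n] by (intro mult_left_mono) (auto simp: algebra_simps)
    finally show ?thesis by (simp add: algebra_simps)
  qed
  define h where "h n = R - r n + e n" for n
  have hlim: "h \<longlonglongrightarrow> 0"
  proof -
    have "(\<lambda>n. R - r n + e n) \<longlonglongrightarrow> R - R + 0"
      by (intro tendsto_intros rR(1) elim)
    then show ?thesis by (simp add: h_def[abs_def])
  qed
  have "Cauchy z"
    unfolding Cauchy_def
  proof (intro allI impI)
    fix \<epsilon> :: real assume "\<epsilon> > 0"
    then have "\<epsilon>\<^sup>2 / (8 * (R + 1)) > 0" using R0 by simp
    then have "\<forall>\<^sub>F n in sequentially. h n < \<epsilon>\<^sup>2 / (8 * (R + 1))"
      using order_tendstoD(2)[OF hlim] by blast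
    then obtain M where M: "\<And>n. n \<ge> M \<Longrightarrow> h n < \<epsilon>\<^sup>2 / (8 * (R + 1))"
      unfolding eventually_sequentially by blast
    have "dist (z m) (z n) < \<epsilon>" if "m \<ge> M" "n \<ge> M" for m n
    proof -
      have "(dist (z m) (z n))\<^sup>2 < \<epsilon>\<^sup>2"
      proof (cases "m \<le> n")
        case True
        have "(dist (z m) (z n))\<^sup>2 \<le> 8 * (R + 1) * h m" using key[OF True] by (simp add: h_def)
        also have "\<dots> < 8 * (R + 1) * (\<epsilon>\<^sup>2 / (8 * (R + 1)))"
          using M[OF that(1)] R0 by (intro mult_strict_left_mono) auto
        finally show ?thesis using R0 by simp
      next
        case False
        have "(dist (z m) (z n))\<^sup>2 \<le> 8 * (R + 1) * h n" using key[of n m] False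
          by (simp add: h_def dist_commute)
        also have "\<dots> < 8 * (R + 1) * (\<epsilon>\<^sup>2 / (8 * (R + 1)))"
          using M[OF that(2)] R0 by (intro mult_strict_left_mono) auto
        finally show ?thesis using R0 by simp
      qed
      then show ?thesis using \<open>\<epsilon> > 0\<close> by (simp add: power2_less_imp_less)
    qed
    then show "\<exists>M. \<forall>m\<ge>M. \<forall>n\<ge>M. dist (z m) (z n) < \<epsilon>" by blast
  qed
  then obtain p where zp: "z \<longlonglongrightarrow> p" using Cauchy_convergent_iff convergent_def by blast
  have pK: "f p \<le> c + e n" for n
  proof -
    have "closed (K n)" unfolding K_def by (rule lsc_closed[OF lsc])
    moreover have "\<forall>\<^sub>F k in sequentially. z k \<in> K n"
      unfolding eventually_sequentially using zK Kmono by blast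
    ultimately have "p \<in> K n" using Lim_in_closed_set[OF _ _ trivial_limit_sequentially zp] by blast
    then show ?thesis by (simp add: K_def)
  qed
  have "f p \<le> c"
  proof (rule tendsto_le[OF trivial_limit_sequentially _ tendsto_const])
    show "(\<lambda>n. c + e n) \<longlonglongrightarrow> c" using tendsto_add[OF tendsto_const elim, of c] by simp
    show "\<forall>\<^sub>F n in sequentially. f p \<le> c + e n" using pK by simp
  qed
  moreover have "dist x p \<le> \<rho>"
  proof (rule tendsto_le[OF trivial_limit_sequentially])
    show "(\<lambda>n. \<rho> + 2 * e n) \<longlonglongrightarrow> \<rho>"
      using tendsto_add[OF tendsto_const tendsto_mult[OF tendsto_const elim], of \<rho> 2] by simp
    show "(\<lambda>n. dist x (z n)) \<longlonglongrightarrow> dist x p" by (intro tendsto_intros zp)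
    show "\<forall>\<^sub>F n in sequentially. dist x (z n) \<le> \<rho> + 2 * e n"
    proof (rule always_eventually, rule allI)
      fix n show "dist x (z n) \<le> \<rho> + 2 * e n" using zd[of n] rle[of n] by linarith
    qed
  qed
  ultimately show ?thesis by blast
qed


lemma exists_min:
  fixes f :: "'a::complete_space \<Rightarrow> real"
  assumes cat: "CAT0 TYPE('a)" and lsc: "lower_semicontinuous f" and qc: "quasi_convex f"
    and tau: "\<tau> > 0"
    and bdd: "bdd_below (range (\<lambda>z. f z + (dist x z)\<^sup>2 / (2 * \<tau>)))"
    and B: "\<And>z. f z + (dist x z)\<^sup>2 / (2 * \<tau>) \<le> moreau f \<tau> x + 1 \<Longrightarrow> - B \<le> f z \<and> dist x z \<le> B"
  shows "resolvent f \<tau> x \<noteq> {}"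
proof -
  define G where "G z = f z + (dist x z)\<^sup>2 / (2 * \<tau>)" for z
  define m where "m = moreau f \<tau> x"
  have mdef: "m = Inf (range G)" by (simp add: m_def moreau_def G_def[abs_def])
  have bddG: "bdd_below (range G)" using bdd by (simp add: G_def[abs_def])
  have Gm: "m \<le> G z" for z unfolding mdef by (rule cInf_lower) (use bddG in auto)
  have Gf: "f z \<le> G z" for z using tau by (simp add: G_def)
  have "\<forall>n. \<exists>z. G z < m + 1 / (real n + 1)"
  proof
    fix n :: nat
    have "Inf (range G) < m + 1 / (real n + 1)" unfolding mdef[symmetric] by simp
    then show "\<exists>z. G z < m + 1 / (real n + 1)"
      by (subst (asm) cInf_less_iff) (use bddG in auto)
  qed
  then obtain z where zn: "\<And>n. G (z n) < m + 1 / (real n + 1)" by metis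
  have zle: "G (z n) \<le> m + 1" for n
  proof -
    have "1 / (real n + 1) \<le> 1" by simp
    then show ?thesis using zn[of n] by linarith
  qed
  have zB: "- B \<le> f (z n) \<and> dist x (z n) \<le> B" for n
    using B[of "z n"] zle[of n] by (simp add: G_def m_def)
  define v where "v n = (f (z n), dist x (z n))" for n
  have "range v \<subseteq> {-B..m+1} \<times> {-B..B}"
  proof
    fix y assume "y \<in> range v"
    then obtain n where y: "y = v n" by blast
    have "-B \<le> dist x (z n)" using zB[of n] zero_le_dist[of x "z n"] by linarith
    then show "y \<in> {-B..m+1} \<times> {-B..B}"
      using zB[of n] Gf[of "z n"] zle[of n] by (auto simp: v_def y)
  qed
  then have "bounded (range v)"
    by (rule bounded_subset[OF bounded_Times[OF bounded_closed_interval bounded_closed_interval]])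
  then obtain l r where r: "strict_mono r" and vl: "(v \<circ> r) \<longlonglongrightarrow> l"
    using bounded_imp_convergent_subsequence by blast
  obtain c d where l: "l = (c, d)" by (cases l)
  have fc: "(\<lambda>n. f (z (r n))) \<longlonglongrightarrow> c"
    using tendsto_fst[OF vl] by (simp add: l v_def o_def)
  have dd: "(\<lambda>n. dist x (z (r n))) \<longlonglongrightarrow> d"
    using tendsto_snd[OF vl] by (simp add: l v_def o_def)
  have d0: "0 \<le> d"
    by (rule tendsto_lowerbound[OF dd]) (auto simp: always_eventually)
  have cd: "c + d\<^sup>2 / (2 * \<tau>) \<le> m"
  proof (rule tendsto_le[OF trivial_limit_sequentially])
    show "(\<lambda>n. m + 1 / (real n + 1)) \<longlonglongrightarrow> m"
    proof -
      have "(\<lambda>n. m + inverse (real (Suc n))) \<longlonglongrightarrow> m + 0"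
        by (intro tendsto_intros LIMSEQ_inverse_real_of_nat)
      then show ?thesis by (simp add: field_simps)
    qed
    show "(\<lambda>n. G (z (r n))) \<longlonglongrightarrow> c + d\<^sup>2 / (2 * \<tau>)"
      unfolding G_def using tau by (intro tendsto_intros fc dd) auto
    show "\<forall>\<^sub>F n in sequentially. G (z (r n)) \<le> m + 1 / (real n + 1)"
    proof (rule always_eventually, rule allI)
      fix n
      have "real n \<le> real (r n)" using seq_suble[OF r, of n] by simp
      then have "1 / (real (r n) + 1) \<le> 1 / (real n + 1)" by (simp add: frac_le)
      then show "G (z (r n)) \<le> m + 1 / (real n + 1)" using zn[of "r n"] by linarith
    qed
  qed
  have "\<exists>p. f p \<le> c \<and> dist x p \<le> d"
  proof (rule level_point[OF cat lsc qc])
    fix \<epsilon> :: real assume "\<epsilon> > 0"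
    have "\<forall>\<^sub>F n in sequentially. dist (f (z (r n))) c < \<epsilon> \<and> dist (dist x (z (r n))) d < \<epsilon>"
      using tendstoD[OF fc \<open>\<epsilon> > 0\<close>] tendstoD[OF dd \<open>\<epsilon> > 0\<close>] by (rule eventually_conj)
    then obtain N where "dist (f (z (r N))) c < \<epsilon> \<and> dist (dist x (z (r N))) d < \<epsilon>"
      unfolding eventually_sequentially by blast
    then show "\<exists>w. f w \<le> c + \<epsilon> \<and> dist x w \<le> d + \<epsilon>"
      by (intro exI[of _ "z (r N)"]) (auto simp: dist_real_def abs_less_iff)
  qed
  then obtain p where p: "f p \<le> c" "dist x p \<le> d" by blast
  have "(dist x p)\<^sup>2 \<le> d\<^sup>2" using p(2) by (simp add: power_mono)
  then have "(dist x p)\<^sup>2 / (2 * \<tau>) \<le> d\<^sup>2 / (2 * \<tau>)" using tau by (simp add: divide_right_mono)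
  then have "G p \<le> m" using p(1) cd by (simp add: G_def)
  then have "G p = m" using Gm[of p] by simp
  then have "p \<in> resolvent f \<tau> x" by (simp add: resolvent_def G_def m_def)
  then show ?thesis by blast
qed


lemma lower_quad:
  fixes f :: "'a::metric_space \<Rightarrow> real"
  assumes cat: "CAT0 TYPE('a)" and lsc: "lower_semicontinuous f"
    and lc: "lambda_convex lam f" and lam: "lam < 0"
  obtains \<delta> where "\<delta> > 0" "\<And>z. f x - 1 - 2 * dist x z / \<delta> + lam / 2 * (dist x z)\<^sup>2 \<le> f z"
proof -
  have "\<forall>\<^sub>F y in nhds x. f x - 1 < f y" using lsc unfolding lower_semicontinuous_def by simp
  then obtain \<delta> where \<delta>: "\<delta> > 0" "\<And>y. dist y x < \<delta> \<Longrightarrow> f x - 1 < f y"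
    unfolding eventually_nhds_metric by blast
  have "f x - 1 - 2 * dist x z / \<delta> + lam / 2 * (dist x z)\<^sup>2 \<le> f z" for z
  proof (cases "dist x z < \<delta>")
    case True
    have "0 \<le> 2 * dist x z / \<delta>" using \<delta> by simp
    moreover have "lam / 2 * (dist x z)\<^sup>2 \<le> 0" using lam by (simp add: mult_nonpos_nonneg)
    moreover have "f x - 1 < f z" using \<delta>(2)[of z] True by (simp add: dist_commute)
    ultimately show ?thesis by linarith
  next
    case False
    have Dpos: "dist x z > 0" "\<delta> \<le> dist x z" using False \<delta> by auto
    define s where "s = \<delta> / (2 * dist x z)"
    have s1: "0 < s" using Dpos \<delta> by (simp add: s_def)
    have s2: "s < 1" using Dpos \<delta> by (simp add: s_def divide_less_eq)
    have s3: "s * dist x z = \<delta> / 2" using Dpos by (simp add: s_def)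
    have s4: "s * (2 * dist x z / \<delta>) = 1" using Dpos \<delta> by (simp add: s_def)
    note s = s1 s2 s3 s4
    obtain \<gamma> where g: "min_geodesic \<gamma> x z" using cat0_geod[OF cat] by blast
    have gg: "\<forall>a\<in>{0..1}. \<forall>b\<in>{0..1}. dist (\<gamma> a) (\<gamma> b) = \<bar>b - a\<bar> * dist x z" and g0: "\<gamma> 0 = x"
      using g by (simp_all add: min_geodesic_def)
    have "(0::real) \<in> {0..1}" "s \<in> {0..1}" using s1 s2 by auto
    then have "dist (\<gamma> 0) (\<gamma> s) = \<bar>s - 0\<bar> * dist x z" using gg by blast
    then have "dist x (\<gamma> s) = s * dist x z" using g0 s1 by simp
    then have "dist (\<gamma> s) x < \<delta>" using s3 \<delta> by (simp add: dist_commute)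
    then have fy: "f x - 1 < f (\<gamma> s)" by (rule \<delta>(2))
    have "\<forall>t\<in>{0<..<1}. f (\<gamma> t) \<le> (1 - t) * f x + t * f z - lam / 2 * (1 - t) * t * (dist x z)\<^sup>2"
      using lc g unfolding lambda_convex_def by blast
    moreover have "s \<in> {0<..<1}" using s by simp
    ultimately have lcs: "f (\<gamma> s) \<le> (1 - s) * f x + s * f z - lam / 2 * (1 - s) * s * (dist x z)\<^sup>2"
      by (rule bspec)
    have e1: "lam / 2 * (1 - s) * s * (dist x z)\<^sup>2 - s * (lam / 2 * (dist x z)\<^sup>2) = (- lam / 2) * (s * s * (dist x z)\<^sup>2)"
      by (simp add: field_simps)
    have e2: "0 \<le> (- lam / 2) * (s * s * (dist x z)\<^sup>2)" using lam s1 by (intro mult_nonneg_nonneg) auto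
    have e3: "(1 - s) * f x = f x - s * f x" by (simp add: algebra_simps)
    have sfz: "s * f x - 1 + s * (lam / 2 * (dist x z)\<^sup>2) \<le> s * f z"
      using fy lcs e1 e2 e3 by linarith
    have e4: "s * (f x - 1 - 2 * dist x z / \<delta> + lam / 2 * (dist x z)\<^sup>2)
        = s * f x - s - s * (2 * dist x z / \<delta>) + s * (lam / 2 * (dist x z)\<^sup>2)"
      by (simp add: ring_distribs)
    have "s * (f x - 1 - 2 * dist x z / \<delta> + lam / 2 * (dist x z)\<^sup>2) \<le> s * f z"
      using e4 s(1) s(4) sfz by linarith
    then show ?thesis using s(1) by (simp add: mult_le_cancel_left_pos)
  qed
  then show ?thesis using that \<delta>(1) by blast
qed

lemma quad_lower:
  fixes k \<delta> D :: real
  assumes "k > 0" "\<delta> > 0"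
  shows "- 1 / (k * \<delta>\<^sup>2) \<le> k * D\<^sup>2 - 2 * D / \<delta>"
proof -
  have "(k * D - 1 / \<delta>)\<^sup>2 / k = k * D\<^sup>2 - 2 * D / \<delta> + 1 / (k * \<delta>\<^sup>2)"
    using assms by (simp add: field_simps power2_eq_square)
  moreover have "0 \<le> (k * D - 1 / \<delta>)\<^sup>2 / k" using assms by simp
  ultimately show ?thesis by (simp add: algebra_simps)
qed

lemma quad_bound:
  fixes k \<delta> D M :: real
  assumes "k > 0" "\<delta> > 0" "k * D\<^sup>2 - 2 * D / \<delta> \<le> M"
  shows "D \<le> (1 + (k * M + 1 / \<delta>\<^sup>2) + 1 / \<delta>) / k"
proof -
  have eq: "(k * D - 1 / \<delta>)\<^sup>2 = k * (k * D\<^sup>2 - 2 * D / \<delta>) + 1 / \<delta>\<^sup>2"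
    using assms by (simp add: field_simps power2_eq_square)
  have "k * (k * D\<^sup>2 - 2 * D / \<delta>) \<le> k * M" using assms by simp
  then have Q: "(k * D - 1 / \<delta>)\<^sup>2 \<le> k * M + 1 / \<delta>\<^sup>2" using eq by linarith
  have y: "k * D - 1 / \<delta> \<le> 1 + (k * D - 1 / \<delta>)\<^sup>2"
  proof -
    have "0 \<le> (k * D - 1 / \<delta> - 1/2)\<^sup>2" by simp
    then show ?thesis by (simp add: power2_eq_square algebra_simps)
  qed
  have "k * D \<le> 1 + (k * M + 1 / \<delta>\<^sup>2) + 1 / \<delta>" using Q y by linarith
  then show ?thesis using assms by (simp add: field_simps)
qed

lemma lin2: "m \<le> a + b \<Longrightarrow> a \<le> p/2 + q/2 - L \<Longrightarrow> b \<le> u/2 + v/2 - E \<Longrightarrow> p + u = m \<Longrightarrow> q + v = m \<Longrightarrow> L + E \<le> (0::real)"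
  by linarith

lemma le_one_plus_sq: "(y::real) \<le> 1 + y\<^sup>2"
proof -
  have "0 \<le> (y - 1/2)\<^sup>2" by simp
  then show ?thesis by (simp add: power2_eq_square algebra_simps)
qed

theorem mainTheorem11:
  fixes f :: "'a::complete_space \<Rightarrow> real"
  assumes "CAT0 TYPE('a)"
    and "lower_semicontinuous f"
    and "quasi_convex f"
  shows "(bdd_below (range f) \<longrightarrow> (\<forall>x \<tau>. \<tau> > 0 \<longrightarrow> resolvent f \<tau> x \<noteq> {}))
       \<and> (\<forall>lam. lam < 0 \<and> lambda_convex lam f \<longrightarrow>
            (\<forall>x \<tau>. 0 < \<tau> \<and> \<tau> < 1 / (- lam) \<longrightarrow> (\<exists>!z. z \<in> resolvent f \<tau> x)))"
proof (intro conjI impI allI)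
  fix x :: 'a and \<tau> :: real
  assume bf: "bdd_below (range f)" and tau: "\<tau> > 0"
  obtain b where b: "\<And>z. b \<le> f z" using bf unfolding bdd_below_def by blast
  define m where "m = moreau f \<tau> x"
  show "resolvent f \<tau> x \<noteq> {}"
  proof (rule exists_min[OF assms tau, of _ "\<bar>b\<bar> + 1 + 2 * \<tau> * \<bar>m + 1 - b\<bar>"])
    show "bdd_below (range (\<lambda>z. f z + (dist x z)\<^sup>2 / (2 * \<tau>)))"
    proof (rule bdd_belowI[of _ b])
      fix y assume "y \<in> range (\<lambda>z. f z + (dist x z)\<^sup>2 / (2 * \<tau>))"
      then obtain z where y: "y = f z + (dist x z)\<^sup>2 / (2 * \<tau>)" by blast
      have "0 \<le> (dist x z)\<^sup>2 / (2 * \<tau>)" using tau by simp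
      then show "b \<le> y" using b[of z] y by linarith
    qed
  next
    fix z assume H: "f z + (dist x z)\<^sup>2 / (2 * \<tau>) \<le> moreau f \<tau> x + 1"
    have "(dist x z)\<^sup>2 / (2 * \<tau>) \<le> m + 1 - b" using H b[of z] by (simp add: m_def)
    then have "(dist x z)\<^sup>2 \<le> 2 * \<tau> * (m + 1 - b)" using tau by (simp add: divide_le_eq mult.commute)
    also have "\<dots> \<le> 2 * \<tau> * \<bar>m + 1 - b\<bar>" using tau by (intro mult_left_mono) auto
    finally have "dist x z \<le> \<bar>b\<bar> + 1 + 2 * \<tau> * \<bar>m + 1 - b\<bar>"
      using le_one_plus_sq[of "dist x z"] by linarith
    moreover have "- (\<bar>b\<bar> + 1 + 2 * \<tau> * \<bar>m + 1 - b\<bar>) \<le> f z"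
    proof -
      have "0 \<le> 2 * \<tau> * \<bar>m + 1 - b\<bar>" using tau by simp
      then show ?thesis using b[of z] abs_ge_minus_self[of b] by linarith
    qed
    ultimately show "- (\<bar>b\<bar> + 1 + 2 * \<tau> * \<bar>m + 1 - b\<bar>) \<le> f z \<and> dist x z \<le> \<bar>b\<bar> + 1 + 2 * \<tau> * \<bar>m + 1 - b\<bar>"
      by blast
  qed
next
  fix lam :: real and x :: 'a and \<tau> :: real
  assume lamH: "lam < 0 \<and> lambda_convex lam f" and tauH: "0 < \<tau> \<and> \<tau> < 1 / (- lam)"
  then have lam: "lam < 0" and lc: "lambda_convex lam f" and tau: "0 < \<tau>" and tau2: "\<tau> < 1 / (- lam)"
    by auto
  have "\<tau> * (- lam) < (1 / (- lam)) * (- lam)" using tau2 lam by (intro mult_strict_right_mono) auto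
  then have "\<tau> * (- lam) < 1" using lam by simp
  then have "- lam < 1 / \<tau>" using tau by (simp add: less_divide_eq mult.commute)
  then have kpos: "(lam + 1 / \<tau>) / 2 > 0" by simp
  define k where "k = (lam + 1 / \<tau>) / 2"
  have kpos': "k > 0" using kpos by (simp add: k_def)
  define G where "G z = f z + (dist x z)\<^sup>2 / (2 * \<tau>)" for z
  define m where "m = moreau f \<tau> x"
  obtain \<delta> where \<delta>: "\<delta> > 0" and lq: "\<And>z. f x - 1 - 2 * dist x z / \<delta> + lam / 2 * (dist x z)\<^sup>2 \<le> f z"
    using lower_quad[OF assms(1,2) lc lam] by blast
  have Glow: "f x - 1 + (k * (dist x z)\<^sup>2 - 2 * dist x z / \<delta>) \<le> G z" for z
  proof -
    have "k * (dist x z)\<^sup>2 = lam / 2 * (dist x z)\<^sup>2 + (dist x z)\<^sup>2 / (2 * \<tau>)"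
      using tau by (simp add: k_def field_simps)
    then show ?thesis using lq[of z] by (simp add: G_def)
  qed
  have bddG: "bdd_below (range G)"
  proof (rule bdd_belowI[of _ "f x - 1 - 1 / (k * \<delta>\<^sup>2)"])
    fix y assume "y \<in> range G"
    then obtain z where "y = G z" by blast
    then show "f x - 1 - 1 / (k * \<delta>\<^sup>2) \<le> y"
      using Glow[of z] quad_lower[OF kpos' \<delta>, of "dist x z"] by linarith
  qed
  have Gm: "m \<le> G z" for z unfolding m_def moreau_def G_def[symmetric]
    by (rule cInf_lower) (use bddG in auto)
  define B1 where "B1 = (1 + (k * (m + 2 - f x) + 1 / \<delta>\<^sup>2) + 1 / \<delta>) / k"
  define L where "L = f x - 1 - 2 * B1 / \<delta> + lam / 2 * B1\<^sup>2"
  have ex: "resolvent f \<tau> x \<noteq> {}"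
  proof (rule exists_min[OF assms tau, of _ "\<bar>B1\<bar> + \<bar>L\<bar>"])
    show "bdd_below (range (\<lambda>z. f z + (dist x z)\<^sup>2 / (2 * \<tau>)))"
      using bddG by (simp add: G_def[abs_def])
  next
    fix z assume H: "f z + (dist x z)\<^sup>2 / (2 * \<tau>) \<le> moreau f \<tau> x + 1"
    have "k * (dist x z)\<^sup>2 - 2 * dist x z / \<delta> \<le> m + 2 - f x"
      using H Glow[of z] by (simp add: G_def m_def)
    then have D: "dist x z \<le> B1" unfolding B1_def by (rule quad_bound[OF kpos' \<delta>])
    have D2: "(dist x z)\<^sup>2 \<le> B1\<^sup>2" using D by (simp add: power_mono)
    have "lam / 2 * B1\<^sup>2 \<le> lam / 2 * (dist x z)\<^sup>2" using D2 lam by (intro mult_left_mono_neg) auto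
    moreover have "2 * dist x z / \<delta> \<le> 2 * B1 / \<delta>" using D \<delta> by (simp add: divide_right_mono)
    ultimately have "L \<le> f z" using lq[of z] unfolding L_def by linarith
    then show "- (\<bar>B1\<bar> + \<bar>L\<bar>) \<le> f z \<and> dist x z \<le> \<bar>B1\<bar> + \<bar>L\<bar>" using D by auto
  qed
  show "\<exists>!z. z \<in> resolvent f \<tau> x"
  proof (rule ex_ex1I)
    show "\<exists>z. z \<in> resolvent f \<tau> x" using ex by blast
  next
    fix z1 z2 assume z1: "z1 \<in> resolvent f \<tau> x" and z2: "z2 \<in> resolvent f \<tau> x"
    have G1: "G z1 = m" and G2: "G z2 = m" using z1 z2 by (auto simp: resolvent_def G_def m_def)
    obtain w where w1: "(dist x w)\<^sup>2 \<le> (dist x z1)\<^sup>2 / 2 + (dist x z2)\<^sup>2 / 2 - (dist z1 z2)\<^sup>2 / 4"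
      and w2: "f w \<le> f z1 / 2 + f z2 / 2 - lam / 8 * (dist z1 z2)\<^sup>2"
      using midpoint_ex[OF assms(1), of z1 z2 f lam] lc by metis
    have "(dist x w)\<^sup>2 / (2 * \<tau>) \<le> ((dist x z1)\<^sup>2 / 2 + (dist x z2)\<^sup>2 / 2 - (dist z1 z2)\<^sup>2 / 4) / (2 * \<tau>)"
      using w1 tau by (simp add: divide_right_mono)
    also have "\<dots> = ((dist x z1)\<^sup>2 / (2 * \<tau>)) / 2 + ((dist x z2)\<^sup>2 / (2 * \<tau>)) / 2 - (dist z1 z2)\<^sup>2 / (8 * \<tau>)"
      using tau by (simp add: field_simps)
    finally have w3: "(dist x w)\<^sup>2 / (2 * \<tau>) \<le> ((dist x z1)\<^sup>2 / (2 * \<tau>)) / 2 + ((dist x z2)\<^sup>2 / (2 * \<tau>)) / 2 - (dist z1 z2)\<^sup>2 / (8 * \<tau>)" .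
    have "m \<le> G w" by (rule Gm)
    then have "lam / 8 * (dist z1 z2)\<^sup>2 + (dist z1 z2)\<^sup>2 / (8 * \<tau>) \<le> 0"
      using lin2[OF _ w2 w3] G1 G2 \<open>m \<le> G w\<close> unfolding G_def by blast
    moreover have "lam / 8 * (dist z1 z2)\<^sup>2 + (dist z1 z2)\<^sup>2 / (8 * \<tau>) = k / 4 * (dist z1 z2)\<^sup>2"
      using tau by (simp add: k_def field_simps)
    ultimately have "k / 4 * (dist z1 z2)\<^sup>2 \<le> 0" by simp
    then have "(dist z1 z2)\<^sup>2 \<le> 0" using kpos' by (simp add: mult_le_0_iff)
    then show "z1 = z2" by simp
  qed
qed

end
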